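(* Let $(X,\mu)$ be a discrete-time BRW with global extinction probability vector $\bar q$, and assume $\bar q\neq\mathbf 1$, i.e. $\bar q(x)<1$ for some $x\in X$. Let $z\in[0,1]^X$ satisfy $z\ge\bar q$ and $G(z|x)\ge z(x)$ for all $x\in X$. Define $\widehat z\in[0,1]^X$ by $\widehat z(x):=\frac{z(x)-\bar q(x)}{1-\bar q(x)}$ if $\bar q(x)<1$ and $\widehat z(x):=1$ if $\bar q(x)=1$. Then for every $x\in X$ such that $\mathcal N_x:=\{y\in X:m_{xy}>0\}$ is nonempty, either $\widehat z(y)=\widehat z(x)$ for all $y\in\mathcal N_x$, or there exists $y\in\mathcal N_x$ with $\widehat z(y)>\widehat z(x)$. In particular, if $\widehat z(x)=1$ then $\widehat z(y)=1$ for all $y\in\mathcal N_x$. The same conclusions hold with $\mathcal N_x$ replaced by the set $\{y\in X: x\to y\}$.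
   Context: $X$ is a finite or countable set and $S_X:=\{f:X\to\mathbb N:\sum_{y}f(y)<\infty\}$. A discrete-time branching random walk (BRW) $(X,\mu)$ is given by a family $\mu=\{\mu_x\}_{x\in X}$ of probability measures on $S_X$: at each generation, each particle at $x$ is replaced, independently of all others, by $f(y)$ particles at $y$ for every $y\in X$, where $f$ is drawn from $\mu_x$. $\eta_n(x)$ is the number of particles at $x$ at generation $n$. The first-moment matrix is $M=(m_{xy})$, $m_{xy}:=\sum_{f\in S_X}f(y)\mu_x(f)$, and it is assumed that $\sup_x\sum_y m_{xy}<\infty$. We write $x\to y$ if there is a finite sequence $x=x_0,x_1,\dots,x_n=y$ ($n\ge0$) with $m_{x_ix_{i+1}}>0$ for all $i$; $x\rightleftharpoons y$ means $x\to y$ and $y\to x$. Standing assumption: in every $\rightleftharpoons$-class there is a vertex $y$ with $\mu_y(\{f:\sum_{w\rightleftharpoons y}f(w)=1\})<1$. The generating function $G:[0,1]^X\to[0,1]^X$ is $G(z|x):=\sum_{f\in S_X}\mu_x(f)\prod_{y\in X}z(y)^{f(y)}$. For $A\subseteq X$, $q(x,A)$ is the probability, starting from one particle at $x$, that there is $N$ with $\eta_n(y)=0$ for all $n\ge N$ and all $y\in A$ (local extinction in $A$); $\bar q(x):=q(x,X)$ is the global extinction probability. Inequalities between elements of $[0,1]^X$ are coordinatewise. *)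

theory Defs
  imports "HOL-Probability.Probability"
begin

text \<open>A BRW on a countable type 'x is a family mu :: 'x => ('x => nat) pmf
  of offspring laws, each supported on finitely supported configurations.\<close>

definition fin_supp :: "('x \<Rightarrow> nat) \<Rightarrow> bool" where
  "fin_supp f \<longleftrightarrow> finite {y. f y \<noteq> 0}"

definition is_BRW :: "('x \<Rightarrow> ('x \<Rightarrow> nat) pmf) \<Rightarrow> bool" where
  "is_BRW mu \<longleftrightarrow> (\<forall>x. set_pmf (mu x) \<subseteq> {f. fin_supp f})"

definition mom :: "('x \<Rightarrow> ('x \<Rightarrow> nat) pmf) \<Rightarrow> 'x \<Rightarrow> 'x \<Rightarrow> ennreal" where
  "mom mu x y = (\<integral>\<^sup>+ f. ennreal (real (f y)) \<partial>measure_pmf (mu x))"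

definition reach :: "('x \<Rightarrow> ('x \<Rightarrow> nat) pmf) \<Rightarrow> 'x \<Rightarrow> 'x \<Rightarrow> bool" where
  "reach mu x y \<longleftrightarrow> (x, y) \<in> {(a, b). mom mu a b > 0}\<^sup>*"

definition commun :: "('x \<Rightarrow> ('x \<Rightarrow> nat) pmf) \<Rightarrow> 'x \<Rightarrow> 'x \<Rightarrow> bool" where
  "commun mu x y \<longleftrightarrow> reach mu x y \<and> reach mu y x"

text \<open>Standing assumptions: bounded row sums of M and the non-degeneracy of every class.\<close>
definition BRW_standing :: "('x \<Rightarrow> ('x \<Rightarrow> nat) pmf) \<Rightarrow> bool" where
  "BRW_standing mu \<longleftrightarrow>
     is_BRW mu \<and>
     (SUP x. \<integral>\<^sup>+ y. mom mu x y \<partial>count_space UNIV) < \<top> \<and>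
     (\<forall>x. \<exists>y. commun mu x y \<and>
        measure_pmf.prob (mu y)
          {f. (\<Sum>w\<in>{w. commun mu w y \<and> f w \<noteq> 0}. f w) = 1} < 1)"

definition genfun :: "('x \<Rightarrow> ('x \<Rightarrow> nat) pmf) \<Rightarrow> ('x \<Rightarrow> real) \<Rightarrow> 'x \<Rightarrow> real" where
  "genfun mu z x = measure_pmf.expectation (mu x) (\<lambda>f. \<Prod>y\<in>{y. f y \<noteq> 0}. z y ^ f y)"

primrec offspring_rep :: "('x \<Rightarrow> ('x \<Rightarrow> nat) pmf) \<Rightarrow> 'x \<Rightarrow> nat \<Rightarrow> ('x \<Rightarrow> nat) pmf" where
  "offspring_rep mu x 0 = return_pmf (\<lambda>_. 0)"
| "offspring_rep mu x (Suc n) =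
     bind_pmf (mu x) (\<lambda>f. bind_pmf (offspring_rep mu x n) (\<lambda>g. return_pmf (\<lambda>y. f y + g y)))"

definition brw_step :: "('x \<Rightarrow> ('x \<Rightarrow> nat) pmf) \<Rightarrow> ('x \<Rightarrow> nat) \<Rightarrow> ('x \<Rightarrow> nat) pmf" where
  "brw_step mu eta =
     (let S = {x. eta x \<noteq> 0} in
      map_pmf (\<lambda>F y. \<Sum>x\<in>S. F x y) (Pi_pmf S (\<lambda>_. 0) (\<lambda>x. offspring_rep mu x (eta x))))"

primrec brw_dist :: "('x \<Rightarrow> ('x \<Rightarrow> nat) pmf) \<Rightarrow> 'x \<Rightarrow> nat \<Rightarrow> ('x \<Rightarrow> nat) pmf" where
  "brw_dist mu x0 0 = return_pmf (\<lambda>y. if y = x0 then 1 else 0)"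
| "brw_dist mu x0 (Suc n) = bind_pmf (brw_dist mu x0 n) (brw_step mu)"

text \<open>Global extinction probability: the state 0 is absorbing, so the event
  "eventually no particles" is the increasing union of the events {eta_n = 0}.\<close>
definition glob_ext :: "('x \<Rightarrow> ('x \<Rightarrow> nat) pmf) \<Rightarrow> 'x \<Rightarrow> real" where
  "glob_ext mu x = (SUP n. pmf (brw_dist mu x n) (\<lambda>_. 0))"

definition zhat :: "('x \<Rightarrow> ('x \<Rightarrow> nat) pmf) \<Rightarrow> ('x \<Rightarrow> real) \<Rightarrow> 'x \<Rightarrow> real" where
  "zhat mu z x = (if glob_ext mu x < 1 then (z x - glob_ext mu x) / (1 - glob_ext mu x) else 1)"

definition neigh :: "('x \<Rightarrow> ('x \<Rightarrow> nat) pmf) \<Rightarrow> 'x \<Rightarrow> 'x set" where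
  "neigh mu x = {y. mom mu x y > 0}"

end

theory Submission
  imports Defs
begin

lemma pmf_integral_bind:
  fixes h :: "'b \<Rightarrow> real"
  assumes "\<And>y. \<bar>h y\<bar> \<le> B"
  shows "measure_pmf.expectation (bind_pmf p f) h =
         measure_pmf.expectation p (\<lambda>x. measure_pmf.expectation (f x) h)"
  unfolding measure_pmf_bind
  apply (rule integral_bind[where K="count_space UNIV" and B=B and B'=1])
  using assms by (auto intro: measure_pmf_in_subprob_algebra measure_pmf.finite_measure
     simp: measure_pmf.emeasure_space_1)

lemma pmf_integrable_bounded:
  fixes h :: "'b \<Rightarrow> real"
  assumes "\<And>y. \<bar>h y\<bar> \<le> B"
  shows "integrable (measure_pmf p) h"
  apply (rule measure_pmf.integrable_const_bound[where B=B])
  using assms by auto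

definition gf :: "('x \<Rightarrow> real) \<Rightarrow> ('x \<Rightarrow> nat) \<Rightarrow> real" where
  "gf s f = (\<Prod>y\<in>{y. f y \<noteq> 0}. s y ^ f y)"

definition unit01 :: "('x \<Rightarrow> real) \<Rightarrow> bool" where
  "unit01 s \<longleftrightarrow> (\<forall>y. 0 \<le> s y \<and> s y \<le> 1)"

lemma gf_bounds: "unit01 s \<Longrightarrow> 0 \<le> gf s f \<and> gf s f \<le> 1"
  unfolding gf_def unit01_def
  by (auto intro!: prod_nonneg prod_le_1 power_le_one)

lemma gf_abs: "unit01 s \<Longrightarrow> \<bar>gf s f\<bar> \<le> 1"
  using gf_bounds[of s f] by auto

lemma gf_zero_fun[simp]: "gf s (\<lambda>_. 0) = 1"
  by (simp add: gf_def)

lemma fin_supp_add: "fin_supp f \<Longrightarrow> fin_supp g \<Longrightarrow> fin_supp (\<lambda>y. f y + g y)"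
  unfolding fin_supp_def
  by (rule finite_subset[of _ "{y. f y \<noteq> 0} \<union> {y. g y \<noteq> 0}"]) auto

lemma fin_supp_zero[simp]: "fin_supp (\<lambda>_. 0)"
  by (simp add: fin_supp_def)

lemma fin_supp_sum: "finite S \<Longrightarrow> (\<And>x. x \<in> S \<Longrightarrow> fin_supp (F x)) \<Longrightarrow> fin_supp (\<lambda>y. \<Sum>x\<in>S. F x y)"
  by (induction S rule: finite_induct) (auto intro: fin_supp_add)

lemma gf_supp_cong:
  assumes "finite U" "{y. f y \<noteq> 0} \<subseteq> U"
  shows "gf s f = (\<Prod>y\<in>U. s y ^ f y)"
  unfolding gf_def
  by (rule prod.mono_neutral_left) (use assms in auto)

lemma gf_add:
  assumes "fin_supp f" "fin_supp g"
  shows "gf s (\<lambda>y. f y + g y) = gf s f * gf s g"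
proof -
  let ?U = "{y. f y \<noteq> 0} \<union> {y. g y \<noteq> 0}"
  have U: "finite ?U" using assms by (auto simp: fin_supp_def)
  have "gf s (\<lambda>y. f y + g y) = (\<Prod>y\<in>?U. s y ^ (f y + g y))"
    by (rule gf_supp_cong[OF U]) auto
  also have "\<dots> = (\<Prod>y\<in>?U. s y ^ f y) * (\<Prod>y\<in>?U. s y ^ g y)"
    by (simp add: power_add prod.distrib)
  also have "\<dots> = gf s f * gf s g"
    using gf_supp_cong[OF U, of f s] gf_supp_cong[OF U, of g s] by auto
  finally show ?thesis .
qed

lemma gf_sum:
  assumes "finite S" "\<And>x. x \<in> S \<Longrightarrow> fin_supp (F x)"
  shows "gf s (\<lambda>y. \<Sum>x\<in>S. F x y) = (\<Prod>x\<in>S. gf s (F x))"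
  using assms
proof (induction S rule: finite_induct)
  case empty
  then show ?case by simp
next
  case (insert a S)
  have "gf s (\<lambda>y. \<Sum>x\<in>insert a S. F x y) = gf s (\<lambda>y. F a y + (\<Sum>x\<in>S. F x y))"
    using insert by simp
  also have "\<dots> = gf s (F a) * gf s (\<lambda>y. \<Sum>x\<in>S. F x y)"
    by (rule gf_add) (use insert in \<open>auto intro: fin_supp_sum\<close>)
  finally show ?case using insert by simp
qed

lemma gf_delta: "gf s (\<lambda>y. if y = x then 1 else 0) = s x"
proof -
  have "{y. (if y = x then 1 else 0::nat) \<noteq> 0} = {x}" by auto
  then show ?thesis by (simp add: gf_def)
qed

lemma gf_zero_arg:
  assumes "fin_supp f"
  shows "gf (\<lambda>_. 0) f = (if f = (\<lambda>_. 0) then 1 else 0)"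
proof (cases "f = (\<lambda>_. 0)")
  case True then show ?thesis by simp
next
  case False
  then obtain y where y: "f y \<noteq> 0" by auto
  have "gf (\<lambda>_. 0) f = 0"
    unfolding gf_def
    by (rule prod_zero) (use assms y in \<open>auto simp: fin_supp_def\<close>)
  then show ?thesis using False by simp
qed

lemma rep_supp:
  assumes "is_BRW mu"
  shows "set_pmf (offspring_rep mu x n) \<subseteq> {f. fin_supp f}"
  using assms by (induction n) (auto simp: is_BRW_def intro!: fin_supp_add)

lemma expectation_nonneg_bounded:
  fixes h :: "'b \<Rightarrow> real"
  assumes "\<And>y. 0 \<le> h y \<and> h y \<le> 1"
  shows "0 \<le> measure_pmf.expectation p h \<and> measure_pmf.expectation p h \<le> 1"
proof
  show "0 \<le> measure_pmf.expectation p h" using assms by (auto intro: integral_nonneg_AE)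
  have "measure_pmf.expectation p h \<le> measure_pmf.expectation p (\<lambda>_. 1)"
    by (rule integral_mono) (use assms in \<open>auto intro: pmf_integrable_bounded[where B=1]\<close>)
  then show "measure_pmf.expectation p h \<le> 1" by simp
qed

lemma genfun_gf: "genfun mu s x = measure_pmf.expectation (mu x) (gf s)"
  unfolding genfun_def gf_def by simp

lemma genfun_unit:
  assumes "unit01 s" shows "unit01 (genfun mu s)"
  unfolding unit01_def genfun_gf
  using expectation_nonneg_bounded[of "gf s"] gf_bounds[OF assms]
  by auto

lemma rep_gen:
  assumes "is_BRW mu" "unit01 s"
  shows "measure_pmf.expectation (offspring_rep mu x n) (gf s) = genfun mu s x ^ n"
proof (induction n)
  case 0
  then show ?case by simp
next
  case (Suc n)
  have "measure_pmf.expectation (offspring_rep mu x (Suc n)) (gf s) =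
     measure_pmf.expectation (mu x) (\<lambda>f. measure_pmf.expectation
        (map_pmf (\<lambda>g y. f y + g y) (offspring_rep mu x n)) (gf s))"
    by (simp add: pmf_integral_bind[OF gf_abs[OF assms(2)]] map_pmf_def)
  also have "\<dots> = measure_pmf.expectation (mu x) (\<lambda>f. gf s f * genfun mu s x ^ n)"
  proof (rule integral_cong_AE)
    show "AE f in measure_pmf (mu x). measure_pmf.expectation
        (map_pmf (\<lambda>g y. f y + g y) (offspring_rep mu x n)) (gf s) = gf s f * genfun mu s x ^ n"
    proof (rule AE_pmfI)
      fix f assume f: "f \<in> set_pmf (mu x)"
      then have ff: "fin_supp f" using assms(1) by (auto simp: is_BRW_def)
      have "measure_pmf.expectation (map_pmf (\<lambda>g y. f y + g y) (offspring_rep mu x n)) (gf s)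
          = measure_pmf.expectation (offspring_rep mu x n) (\<lambda>g. gf s f * gf s g)"
        unfolding integral_map_pmf
        apply (rule integral_cong_AE)
          apply simp apply simp
        apply (rule AE_pmfI)
        using rep_supp[OF assms(1)] ff by (auto intro: gf_add)
      also have "\<dots> = gf s f * genfun mu s x ^ n" using Suc by simp
      finally show "measure_pmf.expectation (map_pmf (\<lambda>g y. f y + g y) (offspring_rep mu x n)) (gf s) = gf s f * genfun mu s x ^ n" .
    qed
  qed simp_all
  also have "\<dots> = genfun mu s x ^ Suc n"
    by (simp add: genfun_gf)
  finally show ?case .
qed

lemma step_supp:
  assumes "is_BRW mu" "fin_supp eta"
  shows "set_pmf (brw_step mu eta) \<subseteq> {f. fin_supp f}"
proof -
  let ?S = "{x. eta x \<noteq> 0}"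
  have S: "finite ?S" using assms(2) by (simp add: fin_supp_def)
  show ?thesis
    unfolding brw_step_def Let_def set_map_pmf set_Pi_pmf[OF S]
  proof safe
    fix F assume F: "F \<in> PiE_dflt ?S (\<lambda>_. 0) (set_pmf \<circ> (\<lambda>x. offspring_rep mu x (eta x)))"
    have "\<And>x. x \<in> ?S \<Longrightarrow> fin_supp (F x)"
      using F rep_supp[OF assms(1)] unfolding PiE_dflt_def by fastforce
    then show "fin_supp (\<lambda>y. \<Sum>x\<in>?S. F x y)" by (rule fin_supp_sum[OF S])
  qed
qed

lemma step_gen:
  assumes "is_BRW mu" "fin_supp eta" "unit01 s"
  shows "measure_pmf.expectation (brw_step mu eta) (gf s) = gf (genfun mu s) eta"
proof -
  let ?S = "{x. eta x \<noteq> 0}"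
  let ?P = "Pi_pmf ?S (\<lambda>_. 0) (\<lambda>x. offspring_rep mu x (eta x))"
  have S: "finite ?S" using assms(2) by (simp add: fin_supp_def)
  have "measure_pmf.expectation (brw_step mu eta) (gf s) =
        measure_pmf.expectation ?P (\<lambda>F. gf s (\<lambda>y. \<Sum>x\<in>?S. F x y))"
    unfolding brw_step_def Let_def integral_map_pmf by simp
  also have "\<dots> = measure_pmf.expectation ?P (\<lambda>F. \<Prod>x\<in>?S. gf s (F x))"
  proof (rule integral_cong_AE)
    show "AE F in measure_pmf ?P. gf s (\<lambda>y. \<Sum>x\<in>?S. F x y) = (\<Prod>x\<in>?S. gf s (F x))"
    proof (rule AE_pmfI)
      fix F assume "F \<in> set_pmf ?P"
      then have "\<And>x. x \<in> ?S \<Longrightarrow> fin_supp (F x)"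
        unfolding set_Pi_pmf[OF S] using rep_supp[OF assms(1)] by (auto simp: PiE_dflt_def)
      then show "gf s (\<lambda>y. \<Sum>x\<in>?S. F x y) = (\<Prod>x\<in>?S. gf s (F x))"
        by (rule gf_sum[OF S])
    qed
  qed simp_all
  also have "\<dots> = (\<Prod>x\<in>?S. measure_pmf.expectation (offspring_rep mu x (eta x)) (gf s))"
    by (rule expectation_prod_Pi_pmf[OF S])
      (use gf_bounds[OF assms(3)] in \<open>auto intro: pmf_integrable_bounded[OF gf_abs[OF assms(3)]]\<close>)
  also have "\<dots> = (\<Prod>x\<in>?S. genfun mu s x ^ eta x)"
    using rep_gen[OF assms(1,3)] by simp
  also have "\<dots> = gf (genfun mu s) eta"
    unfolding gf_def by simp
  finally show ?thesis .
qed

primrec Dn :: "('x \<Rightarrow> ('x \<Rightarrow> nat) pmf) \<Rightarrow> ('x \<Rightarrow> nat) \<Rightarrow> nat \<Rightarrow> ('x \<Rightarrow> nat) pmf" where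
  "Dn mu eta 0 = return_pmf eta"
| "Dn mu eta (Suc n) = bind_pmf (Dn mu eta n) (brw_step mu)"

lemma brw_dist_Dn: "brw_dist mu x n = Dn mu (\<lambda>y. if y = x then 1 else 0) n"
  by (induction n) auto

lemma Dn_supp:
  assumes "is_BRW mu" "fin_supp eta"
  shows "set_pmf (Dn mu eta n) \<subseteq> {f. fin_supp f}"
  using assms step_supp[OF assms(1)] by (induction n) auto

lemma Dn_gen:
  assumes "is_BRW mu" "fin_supp eta"
  shows "unit01 s \<Longrightarrow> measure_pmf.expectation (Dn mu eta n) (gf s) = gf ((genfun mu ^^ n) s) eta"
proof (induction n arbitrary: s)
  case 0
  then show ?case by simp
next
  case (Suc n)
  have "measure_pmf.expectation (Dn mu eta (Suc n)) (gf s) =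
      measure_pmf.expectation (Dn mu eta n) (\<lambda>e. measure_pmf.expectation (brw_step mu e) (gf s))"
    by (simp add: pmf_integral_bind[OF gf_abs[OF Suc.prems]])
  also have "\<dots> = measure_pmf.expectation (Dn mu eta n) (gf (genfun mu s))"
    apply (rule integral_cong_AE) apply simp apply simp
    apply (rule AE_pmfI)
    using Dn_supp[OF assms] step_gen[OF assms(1) _ Suc.prems] by auto
  also have "\<dots> = gf ((genfun mu ^^ n) (genfun mu s)) eta"
    by (rule Suc.IH[OF genfun_unit[OF Suc.prems]])
  also have "\<dots> = gf ((genfun mu ^^ Suc n) s) eta"
    by (simp add: funpow_Suc_right del: funpow.simps)
  finally show ?case .
qed

lemma fin_supp_delta: "fin_supp (\<lambda>y. if y = x then 1 else 0::nat)"
  by (simp add: fin_supp_def)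

lemma brw_gen:
  assumes "is_BRW mu" "unit01 s"
  shows "measure_pmf.expectation (brw_dist mu x n) (gf s) = (genfun mu ^^ n) s x"
  unfolding brw_dist_Dn using Dn_gen[OF assms(1) fin_supp_delta assms(2)] gf_delta by simp

lemma pmf_zero_iter:
  assumes "is_BRW mu"
  shows "pmf (brw_dist mu x n) (\<lambda>_. 0) = (genfun mu ^^ n) (\<lambda>_. 0) x"
proof -
  have u: "unit01 (\<lambda>_. 0::real)" by (simp add: unit01_def)
  have "measure_pmf.expectation (brw_dist mu x n) (gf (\<lambda>_. 0)) =
        measure_pmf.expectation (brw_dist mu x n) (indicator {\<lambda>_. 0})"
    apply (rule integral_cong_AE) apply simp apply simp
  proof (rule AE_pmfI)
    fix f assume "f \<in> set_pmf (brw_dist mu x n)"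
    then have "fin_supp f" using Dn_supp[OF assms fin_supp_delta] by (auto simp: brw_dist_Dn)
    then show "gf (\<lambda>_. 0) f = indicator {\<lambda>_. 0} f"
      using gf_zero_arg[of f] by (simp add: indicator_def)
  qed
  also have "\<dots> = pmf (brw_dist mu x n) (\<lambda>_. 0)"
    by (simp add: measure_pmf_single)
  finally show ?thesis using brw_gen[OF assms u] by simp
qed

lemma gf_mono:
  assumes "\<And>y. 0 \<le> s y" "\<And>y. s y \<le> t y"
  shows "gf s f \<le> gf t f"
  unfolding gf_def using assms by (auto intro!: prod_mono power_mono)

lemma genfun_mono:
  assumes "unit01 s" "unit01 t" "\<And>y. s y \<le> t y"
  shows "genfun mu s x \<le> genfun mu t x"
  unfolding genfun_gf
  apply (rule integral_mono)
  using assms by (auto intro!: gf_mono pmf_integrable_bounded[OF gf_abs] simp: unit01_def)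

lemma iter_unit: "unit01 ((genfun mu ^^ n) (\<lambda>_. 0))"
proof (induction n)
  case 0 then show ?case by (simp add: unit01_def)
next
  case (Suc n) then show ?case using genfun_unit by simp
qed

lemma iter_mono: "(genfun mu ^^ n) (\<lambda>_. 0) y \<le> (genfun mu ^^ Suc n) (\<lambda>_. 0) y"
proof (induction n arbitrary: y)
  case 0
  then show ?case using genfun_unit[of "\<lambda>_. 0" mu] by (simp add: unit01_def)
next
  case (Suc n)
  then show ?case
    using genfun_mono[OF iter_unit iter_unit, of n mu "Suc n"] by simp
qed

lemma glob_ext_iter:
  assumes "is_BRW mu"
  shows "glob_ext mu x = (SUP n. (genfun mu ^^ n) (\<lambda>_. 0) x)"
  unfolding glob_ext_def pmf_zero_iter[OF assms] ..

lemma iter_bdd: "bdd_above (range (\<lambda>n. (genfun mu ^^ n) (\<lambda>_. 0) x))"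
  using iter_unit[of _ mu] by (auto simp: unit01_def intro!: bdd_aboveI[where M=1])

lemma iter_le_q:
  assumes "is_BRW mu"
  shows "(genfun mu ^^ n) (\<lambda>_. 0) x \<le> glob_ext mu x"
  unfolding glob_ext_iter[OF assms] by (rule cSUP_upper[OF _ iter_bdd]) simp

lemma q_unit:
  assumes "is_BRW mu"
  shows "unit01 (glob_ext mu)"
  unfolding unit01_def
proof
  fix x
  have "0 \<le> glob_ext mu x" using iter_le_q[OF assms, of 0 x] by simp
  moreover have "glob_ext mu x \<le> 1"
    unfolding glob_ext_iter[OF assms]
    by (rule cSUP_least) (use iter_unit[of _ mu] in \<open>auto simp: unit01_def\<close>)
  ultimately show "0 \<le> glob_ext mu x \<and> glob_ext mu x \<le> 1" by simp
qed

lemma iter_lim: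
  assumes "is_BRW mu"
  shows "(\<lambda>n. (genfun mu ^^ n) (\<lambda>_. 0) x) \<longlonglongrightarrow> glob_ext mu x"
  unfolding glob_ext_iter[OF assms]
  by (rule LIMSEQ_incseq_SUP[OF iter_bdd]) (rule incseq_SucI, rule iter_mono)

lemma q_fixed_le:
  assumes "is_BRW mu"
  shows "genfun mu (glob_ext mu) x \<le> glob_ext mu x"
proof -
  let ?P = "\<lambda>n. (genfun mu ^^ n) (\<lambda>_. 0)"
  have lim: "(\<lambda>n. measure_pmf.expectation (mu x) (\<lambda>f. gf (?P n) f)) \<longlonglongrightarrow>
        measure_pmf.expectation (mu x) (gf (glob_ext mu))"
  proof (rule integral_dominated_convergence[where w="\<lambda>_. 1"])
    show "AE f in measure_pmf (mu x). (\<lambda>n. gf (?P n) f) \<longlonglongrightarrow> gf (glob_ext mu) f"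
    proof (rule AE_pmfI)
      fix f assume "f \<in> set_pmf (mu x)"
      then have fin: "finite {y. f y \<noteq> 0}" using assms by (auto simp: is_BRW_def fin_supp_def)
      show "(\<lambda>n. gf (?P n) f) \<longlonglongrightarrow> gf (glob_ext mu) f"
        unfolding gf_def
        by (intro tendsto_prod tendsto_power iter_lim[OF assms])
    qed
    show "\<And>n. AE f in measure_pmf (mu x). norm (gf (?P n) f) \<le> 1"
      using gf_abs[OF iter_unit] by (intro AE_pmfI) simp
  qed simp_all
  have "\<And>n. measure_pmf.expectation (mu x) (\<lambda>f. gf (?P n) f) \<le> glob_ext mu x"
  proof -
    fix n
    have "measure_pmf.expectation (mu x) (\<lambda>f. gf (?P n) f) = ?P (Suc n) x"
      by (simp add: genfun_gf)
    then show "measure_pmf.expectation (mu x) (\<lambda>f. gf (?P n) f) \<le> glob_ext mu x"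
      using iter_le_q[OF assms, of "Suc n" x] by simp
  qed
  then have "measure_pmf.expectation (mu x) (gf (glob_ext mu)) \<le> glob_ext mu x"
    using LIMSEQ_le_const2[OF lim] by blast
  then show ?thesis by (simp add: genfun_gf)
qed

lemma conv_base:
  fixes q t P Q :: real
  assumes "0 \<le> q" "q \<le> 1" "0 \<le> t" "t \<le> 1" "Q \<le> 1" "0 \<le> P" "P \<le> (1-t)*Q + t"
  shows "(q + t*(1-q)) * P \<le> (1-t)*(q*Q) + t"
proof -
  have r: "0 \<le> q + t*(1-q)" using assms by simp
  have "(q + t*(1-q)) * P \<le> (q + t*(1-q)) * ((1-t)*Q + t)"
    by (rule mult_left_mono[OF assms(7) r])
  moreover have "(q + t*(1-q)) * ((1-t)*Q + t) - ((1-t)*(q*Q) + t) = (t*(1-q)*(1-t))*(Q-1)"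
    by (simp add: algebra_simps)
  moreover have "(t*(1-q)*(1-t))*(Q-1) \<le> 0"
    by (rule mult_nonneg_nonpos) (use assms in auto)
  ultimately show ?thesis by linarith
qed

lemma conv_pow:
  fixes q t :: real
  assumes "0 \<le> q" "q \<le> 1" "0 \<le> t" "t \<le> 1"
  shows "0 \<le> Q \<Longrightarrow> Q \<le> 1 \<Longrightarrow> 0 \<le> P \<Longrightarrow> P \<le> (1-t)*Q + t \<Longrightarrow>
     (q + t*(1-q))^k * P \<le> (1-t)*(q^k*Q) + t"
proof (induction k arbitrary: P Q)
  case 0
  then show ?case by simp
next
  case (Suc k)
  have r: "0 \<le> q + t*(1-q)" using assms by simp
  have "(q + t*(1-q))^k * ((q + t*(1-q)) * P) \<le> (1-t)*(q^k*(q*Q)) + t"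
    apply (rule Suc.IH)
    using Suc.prems assms r by (auto intro: conv_base mult_le_one)
  then show ?case by (simp add: algebra_simps)
qed

lemma conv_prod:
  fixes t :: real
  assumes "unit01 q" "0 \<le> t" "t \<le> 1"
  shows "gf (\<lambda>y. q y + t*(1 - q y)) f \<le> (1-t) * gf q f + t"
proof (cases "finite {y. f y \<noteq> 0}")
  case False
  then show ?thesis by (simp add: gf_def)
next
  case True
  have "finite A \<Longrightarrow> (\<Prod>y\<in>A. (q y + t*(1 - q y)) ^ f y) \<le> (1-t) * (\<Prod>y\<in>A. q y ^ f y) + t" for A
  proof (induction A rule: finite_induct)
    case empty
    then show ?case by simp
  next
    case (insert a A)
    have "(q a + t*(1 - q a)) ^ f a * (\<Prod>y\<in>A. (q y + t*(1 - q y)) ^ f y)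
        \<le> (1-t) * (q a ^ f a * (\<Prod>y\<in>A. q y ^ f y)) + t"
      apply (rule conv_pow)
      using assms insert.IH by (auto simp: unit01_def intro!: prod_nonneg prod_le_1 power_le_one)
    then show ?case using insert by simp
  qed
  from this[OF True] show ?thesis by (simp add: gf_def)
qed

lemma supp_neigh:
  assumes "f \<in> set_pmf (mu x)" "f y \<noteq> 0"
  shows "y \<in> neigh mu x"
proof (rule ccontr)
  assume "y \<notin> neigh mu x"
  then have "mom mu x y = 0" by (simp add: neigh_def)
  then have "AE g in measure_pmf (mu x). ennreal (real (g y)) = 0"
    unfolding mom_def by (subst (asm) nn_integral_0_iff_AE) auto
  then show False using assms by (auto simp: AE_measure_pmf_iff)
qed

lemma neigh_witness:
  assumes "y \<in> neigh mu x"
  shows "\<exists>f\<in>set_pmf (mu x). f y \<noteq> 0"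
proof (rule ccontr)
  assume "\<not> ?thesis"
  then have "AE g in measure_pmf (mu x). ennreal (real (g y)) = 0"
    by (auto simp: AE_measure_pmf_iff)
  then have "mom mu x y = 0" unfolding mom_def by (subst nn_integral_0_iff_AE) auto
  then show False using assms by (simp add: neigh_def)
qed

lemma zhat_facts:
  assumes "is_BRW mu" "\<And>y. 0 \<le> z y \<and> z y \<le> 1" "\<And>y. glob_ext mu y \<le> z y"
  shows "0 \<le> zhat mu z y" "zhat mu z y \<le> 1"
    "z y = glob_ext mu y + (1 - glob_ext mu y) * zhat mu z y"
    "zhat mu z y < 1 \<Longrightarrow> glob_ext mu y < 1"
proof -
  have q: "0 \<le> glob_ext mu y" "glob_ext mu y \<le> 1" using q_unit[OF assms(1)] by (auto simp: unit01_def)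
  have z: "0 \<le> z y" "z y \<le> 1" "glob_ext mu y \<le> z y" using assms(2,3) by auto
  show "0 \<le> zhat mu z y" "zhat mu z y \<le> 1"
    "z y = glob_ext mu y + (1 - glob_ext mu y) * zhat mu z y"
    using q z by (auto simp: zhat_def field_simps)
  show "zhat mu z y < 1 \<Longrightarrow> glob_ext mu y < 1"
    by (auto simp: zhat_def split: if_splits)
qed

lemma key:
  assumes brw: "is_BRW mu" and zu: "\<And>y. 0 \<le> z y \<and> z y \<le> 1"
    and qz: "\<And>y. glob_ext mu y \<le> z y" and zG: "\<And>y. genfun mu z y \<ge> z y"
    and le: "\<forall>y\<in>neigh mu x. zhat mu z y \<le> zhat mu z x"
  shows "\<forall>y\<in>neigh mu x. zhat mu z y = zhat mu z x"
proof (rule ccontr)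
  assume "\<not> ?thesis"
  then obtain y0 where y0: "y0 \<in> neigh mu x" "zhat mu z y0 < zhat mu z x"
    using le by force
  define q where "q = glob_ext mu"
  define a where "a = zhat mu z x"
  define w where "w = (\<lambda>y. q y + a * (1 - q y))"
  note zf = zhat_facts[OF brw zu qz, folded q_def]
  have qu: "0 \<le> q y" "q y \<le> 1" for y using q_unit[OF brw] by (auto simp: unit01_def q_def)
  have a: "0 < a" "a \<le> 1" using y0 zf(1)[of y0] zf(2)[of x] by (auto simp: a_def)
  have qy0: "q y0 < 1" using zf(4)[of y0] y0 zf(2)[of x] by (auto simp: a_def)
  have wpos: "0 < w y" for y
  proof -
    have "a * q y \<le> 1 * q y" by (rule mult_right_mono) (use a qu[of y] in auto)
    then have "a \<le> w y" by (simp add: w_def algebra_simps)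
    then show ?thesis using a by simp
  qed
  have zw: "z y \<le> w y" if "y \<in> neigh mu x" for y
  proof -
    have "(1 - q y) * zhat mu z y \<le> (1 - q y) * a"
      by (rule mult_left_mono) (use le that qu[of y] in \<open>auto simp: a_def\<close>)
    then show ?thesis using zf(3)[of y] by (simp add: w_def algebra_simps)
  qed
  have zw0: "z y0 < w y0"
  proof -
    have "(1 - q y0) * zhat mu z y0 < (1 - q y0) * a"
      by (rule mult_strict_left_mono) (use y0 qy0 in \<open>auto simp: a_def\<close>)
    then show ?thesis using zf(3)[of y0] by (simp add: w_def algebra_simps)
  qed
  have ptw: "gf z f \<le> gf w f" if "f \<in> set_pmf (mu x)" for f
    unfolding gf_def
    apply (rule prod_mono)
    using zu zw supp_neigh[of f mu x, OF that] by (auto intro!: power_mono)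
  obtain f0 where f0: "f0 \<in> set_pmf (mu x)" "f0 y0 \<noteq> 0" using neigh_witness[OF y0(1)] by blast
  have strict: "gf z f0 < gf w f0"
  proof -
    let ?A = "{y. f0 y \<noteq> 0}"
    have A: "finite ?A" using f0 brw by (auto simp: is_BRW_def fin_supp_def)
    have inA: "y0 \<in> ?A" using f0 by simp
    have "gf z f0 = z y0 ^ f0 y0 * (\<Prod>y\<in>?A - {y0}. z y ^ f0 y)"
      unfolding gf_def by (rule prod.remove[OF A inA])
    also have "\<dots> \<le> z y0 ^ f0 y0 * (\<Prod>y\<in>?A - {y0}. w y ^ f0 y)"
      apply (rule mult_left_mono)
       apply (rule prod_mono)
      using zu zw supp_neigh[of f0 mu x, OF f0(1)] by (auto intro!: power_mono)
    also have "\<dots> < w y0 ^ f0 y0 * (\<Prod>y\<in>?A - {y0}. w y ^ f0 y)"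
      apply (rule mult_strict_right_mono)
       apply (rule power_strict_mono)
      using zw0 zu f0 wpos by (auto intro!: prod_pos)
    also have "\<dots> = gf w f0"
      unfolding gf_def by (rule prod.remove[OF A inA, symmetric])
    finally show ?thesis .
  qed
  have wu: "unit01 w" unfolding unit01_def
  proof
    fix y
    have "a * (1 - q y) \<le> 1 * (1 - q y)" by (rule mult_right_mono) (use a qu[of y] in auto)
    then show "0 \<le> w y \<and> w y \<le> 1" using wpos[of y] by (simp add: w_def)
  qed
  have zu': "unit01 z" using zu by (simp add: unit01_def)
  have qu': "unit01 q" using qu by (simp add: unit01_def)
  have intw: "integrable (measure_pmf (mu x)) (gf w)" by (rule pmf_integrable_bounded[OF gf_abs[OF wu]])
  have intz: "integrable (measure_pmf (mu x)) (gf z)" by (rule pmf_integrable_bounded[OF gf_abs[OF zu']])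
  have intq: "integrable (measure_pmf (mu x)) (gf q)" by (rule pmf_integrable_bounded[OF gf_abs[OF qu']])
  have d0: "measure_pmf.expectation (mu x) (\<lambda>f. gf w f - gf z f) \<noteq> 0"
  proof
    assume "measure_pmf.expectation (mu x) (\<lambda>f. gf w f - gf z f) = 0"
    then have "AE f in measure_pmf (mu x). gf w f - gf z f = 0"
      by (subst (asm) integral_nonneg_eq_0_iff_AE)
        (use intw intz ptw in \<open>auto intro!: AE_pmfI\<close>)
    then show False using f0 strict by (auto simp: AE_measure_pmf_iff)
  qed
  have d1: "measure_pmf.expectation (mu x) (\<lambda>f. gf w f - gf z f) \<ge> 0"
    by (rule integral_nonneg_AE) (use ptw in \<open>auto intro!: AE_pmfI\<close>)
  have lt: "genfun mu z x < measure_pmf.expectation (mu x) (gf w)"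
    using d0 d1 Bochner_Integration.integral_diff[OF intw intz] by (simp add: genfun_gf)
  have "measure_pmf.expectation (mu x) (gf w) \<le> measure_pmf.expectation (mu x) (\<lambda>f. (1-a) * gf q f + a)"
    apply (rule integral_mono[OF intw])
    using intq conv_prod[OF qu' less_imp_le[OF a(1)] a(2)] by (auto simp: w_def)
  also have "\<dots> = (1-a) * genfun mu q x + a"
    using intq by (simp add: genfun_gf)
  also have "\<dots> \<le> (1-a) * q x + a"
    using q_fixed_le[OF brw, of x] a by (simp add: q_def mult_left_mono)
  also have "\<dots> = z x" using zf(3)[of x] by (simp add: a_def algebra_simps)
  finally show False using lt zG[of x] by simp
qed

theorem mainTheorem1:
  fixes mu :: "'x::countable \<Rightarrow> ('x \<Rightarrow> nat) pmf" and z :: "'x \<Rightarrow> real"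
  assumes "BRW_standing mu"
    and "\<exists>x. glob_ext mu x < 1"
    and "\<And>x. 0 \<le> z x \<and> z x \<le> 1"
    and "\<And>x. glob_ext mu x \<le> z x"
    and "\<And>x. genfun mu z x \<ge> z x"
  shows "\<forall>x. (neigh mu x \<noteq> {} \<longrightarrow>
              ((\<forall>y\<in>neigh mu x. zhat mu z y = zhat mu z x) \<or>
               (\<exists>y\<in>neigh mu x. zhat mu z y > zhat mu z x)))
           \<and> (zhat mu z x = 1 \<longrightarrow> (\<forall>y\<in>neigh mu x. zhat mu z y = 1))
           \<and> ({y. reach mu x y} \<noteq> {} \<longrightarrow>
              ((\<forall>y\<in>{y. reach mu x y}. zhat mu z y = zhat mu z x) \<or>
               (\<exists>y\<in>{y. reach mu x y}. zhat mu z y > zhat mu z x)))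
           \<and> (zhat mu z x = 1 \<longrightarrow> (\<forall>y\<in>{y. reach mu x y}. zhat mu z y = 1))"
proof -
  have brw: "is_BRW mu" using assms(1) by (simp add: BRW_standing_def)
  note K = key[OF brw assms(3,4,5)]
  note zf = zhat_facts[OF brw assms(3,4)]
  have reachC: "(\<forall>y\<in>{y. reach mu x y}. zhat mu z y = zhat mu z x) \<or>
               (\<exists>y\<in>{y. reach mu x y}. zhat mu z y > zhat mu z x)" for x
  proof (rule disjCI)
    assume "\<not> (\<exists>y\<in>{y. reach mu x y}. zhat mu z y > zhat mu z x)"
    then have le: "\<And>y. reach mu x y \<Longrightarrow> zhat mu z y \<le> zhat mu z x"
      by (meson mem_Collect_eq not_le)
    have "(x, y) \<in> {(a, b). mom mu a b > 0}\<^sup>* \<Longrightarrow> zhat mu z y = zhat mu z x" for y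
    proof (induction rule: rtrancl_induct)
      case base
      then show ?case by simp
    next
      case (step y y')
      have A: "\<forall>v\<in>neigh mu y. zhat mu z v \<le> zhat mu z y"
      proof
        fix v assume "v \<in> neigh mu y"
        then have "(y, v) \<in> {(a, b). mom mu a b > 0}" by (simp add: neigh_def)
        with step(1) have "(x, v) \<in> {(a, b). mom mu a b > 0}\<^sup>*"
          by (rule rtrancl_into_rtrancl)
        then have "reach mu x v" by (simp add: reach_def)
        from le[OF this] show "zhat mu z v \<le> zhat mu z y" using step.IH by linarith
      qed
      have B: "y' \<in> neigh mu y" using step(2) by (simp add: neigh_def)
      have "zhat mu z y' = zhat mu z y" using K[OF A] B by blast
      then show ?case using step.IH by linarith
    qed
    then show "\<forall>y\<in>{y. reach mu x y}. zhat mu z y = zhat mu z x"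
      unfolding reach_def by blast
  qed
  show ?thesis
  proof (intro allI conjI impI)
    fix x
    show "(\<forall>y\<in>neigh mu x. zhat mu z y = zhat mu z x) \<or> (\<exists>y\<in>neigh mu x. zhat mu z y > zhat mu z x)"
    proof (rule disjCI)
      assume "\<not> (\<exists>y\<in>neigh mu x. zhat mu z y > zhat mu z x)"
      then have "\<forall>y\<in>neigh mu x. zhat mu z y \<le> zhat mu z x" by (simp add: not_less)
      then show "\<forall>y\<in>neigh mu x. zhat mu z y = zhat mu z x" by (rule K)
    qed
    show "\<forall>y\<in>neigh mu x. zhat mu z y = 1" if "zhat mu z x = 1"
    proof -
      have "\<forall>y\<in>neigh mu x. zhat mu z y \<le> zhat mu z x" using zf(2) that by simp
      then show ?thesis using K[of x] that by simp
    qed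
    show "(\<forall>y\<in>{y. reach mu x y}. zhat mu z y = zhat mu z x) \<or>
               (\<exists>y\<in>{y. reach mu x y}. zhat mu z y > zhat mu z x)" by (rule reachC)
    show "\<forall>y\<in>{y. reach mu x y}. zhat mu z y = 1" if "zhat mu z x = 1"
    proof -
      have "\<not> (\<exists>y\<in>{y. reach mu x y}. zhat mu z y > zhat mu z x)"
        using zf(2) that by (auto simp: not_less)
      then show ?thesis using reachC[of x] that by auto
    qed
  qed
qed

end
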